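(* Let $\omega\colon\mathbf Z_+\to(0,+\infty)$ be a weight which is bounded from below. Then $\mathrm{span}[h_m(\mu,\cdot);\ m\ge0,\ \mu\in\mathbf D]$ is dense in $\mathcal X_\omega$. In particular, for $\omega=\omega_0$ with $\omega_0(n)=(n+1)/\pi$, the set $\{h_m(\mu,\cdot);\ m\ge0,\ \mu\in\mathbf D\}$ spans a dense subspace of $\mathcal X_{\omega_0}$.
   Context: $\mathbf D$ is the open unit disk. $\mathcal X_\omega$ is the Hilbert space of holomorphic functions $f(z)=\sum_{n\ge3}c_nz^n$ on $\mathbf D$ with $\|f\|_\omega^2=\sum_{n\ge3}|c_n|^2/\omega(n)<\infty$ (the quotient of the weighted Bergman space $\mathcal B^2_\omega$ by $\mathrm{span}[1,z,z^2]$). For $\mu\in\mathbf C$ and $m\ge1$, $h_m(\mu,z)=\sum_{n\ge0}\mu^n(z^{(6m+4)2^n}-z^{(2m+1)2^n})$, and $h_0(\mu,z)=\sum_{n\ge0}\mu^nz^{2^{n+2}}$; when $\omega$ is bounded from below these belong to $\mathcal X_\omega$ for $\mu\in\mathbf D$. *)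

theory Defs
  imports "HOL-Analysis.Analysis"
begin

definition taylor_coef :: "(complex \<Rightarrow> complex) \<Rightarrow> nat \<Rightarrow> complex" where
  "taylor_coef f n = (deriv ^^ n) f 0 / of_nat (fact n)"

definition X_omega :: "(nat \<Rightarrow> real) \<Rightarrow> (complex \<Rightarrow> complex) set" where
  "X_omega \<omega> = {f. f holomorphic_on ball 0 1 \<and> (\<forall>n<3. taylor_coef f n = 0) \<and>
      summable (\<lambda>n. (cmod (taylor_coef f n))\<^sup>2 / \<omega> n)}"

definition norm_omega :: "(nat \<Rightarrow> real) \<Rightarrow> (complex \<Rightarrow> complex) \<Rightarrow> real" where
  "norm_omega \<omega> f = sqrt (\<Sum>n. (cmod (taylor_coef f n))\<^sup>2 / \<omega> n)"

definition h_fun :: "nat \<Rightarrow> complex \<Rightarrow> complex \<Rightarrow> complex" where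
  "h_fun m \<mu> z = (if m = 0 then (\<Sum>n. \<mu> ^ n * z ^ (2 ^ (n + 2)))
     else (\<Sum>n. \<mu> ^ n * (z ^ ((6 * m + 4) * 2 ^ n) - z ^ ((2 * m + 1) * 2 ^ n))))"

definition h_span_dense :: "(nat \<Rightarrow> real) \<Rightarrow> bool" where
  "h_span_dense \<omega> \<longleftrightarrow>
     (\<forall>f \<in> X_omega \<omega>. \<forall>\<epsilon>>0. \<exists>(k::nat) (a::nat \<Rightarrow> complex) (ms::nat \<Rightarrow> nat) (\<mu>s::nat \<Rightarrow> complex).
        (\<forall>i<k. \<mu>s i \<in> ball 0 1) \<and>
        norm_omega \<omega> (\<lambda>z. f z - (\<Sum>i<k. a i * h_fun (ms i) (\<mu>s i) z)) < \<epsilon>)"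

definition omega0 :: "nat \<Rightarrow> real" where
  "omega0 n = (real n + 1) / pi"

end

theory Submission
  imports Defs "HOL-Complex_Analysis.Complex_Analysis"
begin
lemma summ_le: "summable g \<Longrightarrow> (\<And>n. 0 \<le> f n) \<Longrightarrow> (\<And>n. f n \<le> g n) \<Longrightarrow> summable (f::nat\<Rightarrow>real)"
  by (rule summable_comparison_test'[where N=0]) auto

lemma sq_bound: "((a::real) + b)\<^sup>2 \<le> 2 * a\<^sup>2 + 2 * b\<^sup>2"
proof -
  have "0 \<le> (a - b)\<^sup>2" by simp
  thus ?thesis by (simp add: power2_eq_square algebra_simps)
qed

locale wt =
  fixes \<omega> :: "nat \<Rightarrow> real" and c :: real
  assumes pos: "\<And>n. \<omega> n > 0" and cpos: "c > 0" and lb: "\<And>n. c \<le> \<omega> n"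
begin

definition W :: "(nat \<Rightarrow> complex) \<Rightarrow> bool" where
  "W x \<longleftrightarrow> summable (\<lambda>n. (cmod (x n))\<^sup>2 / \<omega> n)"

definition Nm :: "(nat \<Rightarrow> complex) \<Rightarrow> real" where
  "Nm x = sqrt (\<Sum>n. (cmod (x n))\<^sup>2 / \<omega> n)"

lemma Nm_nonneg: "W x \<Longrightarrow> Nm x \<ge> 0"
  unfolding Nm_def W_def using pos by (intro real_sqrt_ge_zero suminf_nonneg) (auto intro: divide_nonneg_pos)

lemma W_bound:
  assumes "W y" "K \<ge> 0" "\<And>n. cmod (x n) \<le> K * cmod (y n)"
  shows "W x \<and> Nm x \<le> K * Nm y"
proof -
  have le: "(cmod (x n))\<^sup>2 / \<omega> n \<le> K\<^sup>2 * ((cmod (y n))\<^sup>2 / \<omega> n)" for n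
  proof -
    have "(cmod (x n))\<^sup>2 \<le> (K * cmod (y n))\<^sup>2"
      using assms(3)[of n] by (intro power_mono) auto
    thus ?thesis using pos[of n] by (simp add: divide_right_mono power_mult_distrib)
  qed
  have sy: "summable (\<lambda>n. K\<^sup>2 * ((cmod (y n))\<^sup>2 / \<omega> n))"
    using assms(1) unfolding W_def by (intro summable_mult)
  have sx: "summable (\<lambda>n. (cmod (x n))\<^sup>2 / \<omega> n)"
    by (rule summ_le[OF sy]) (use le pos in \<open>auto intro!: divide_nonneg_pos\<close>)
  have "(\<Sum>n. (cmod (x n))\<^sup>2 / \<omega> n) \<le> (\<Sum>n. K\<^sup>2 * ((cmod (y n))\<^sup>2 / \<omega> n))"
    by (rule suminf_le[OF le sx sy])
  also have "\<dots> = K\<^sup>2 * (\<Sum>n. (cmod (y n))\<^sup>2 / \<omega> n)"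
    using assms(1) unfolding W_def by (rule suminf_mult)
  finally have "Nm x \<le> sqrt (K\<^sup>2 * (\<Sum>n. (cmod (y n))\<^sup>2 / \<omega> n))"
    unfolding Nm_def by simp
  also have "\<dots> = K * Nm y" using assms(2) by (simp add: Nm_def real_sqrt_mult)
  finally show ?thesis using sx W_def by auto
qed

lemma W_scale: "W x \<Longrightarrow> W (\<lambda>n. a * x n) \<and> Nm (\<lambda>n. a * x n) = cmod a * Nm x"
proof -
  assume w: "W x"
  have "(\<Sum>n. (cmod (a * x n))\<^sup>2 / \<omega> n) = (\<Sum>n. (cmod a)\<^sup>2 * ((cmod (x n))\<^sup>2 / \<omega> n))"
    by (simp add: norm_mult power_mult_distrib)
  also have "\<dots> = (cmod a)\<^sup>2 * (\<Sum>n. (cmod (x n))\<^sup>2 / \<omega> n)"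
    using w unfolding W_def by (rule suminf_mult)
  finally have "Nm (\<lambda>n. a * x n) = cmod a * Nm x"
    by (simp add: Nm_def real_sqrt_mult)
  moreover have "W (\<lambda>n. a * x n)"
    using summable_mult[OF w[unfolded W_def], of "(cmod a)\<^sup>2"] unfolding W_def
    by (simp add: norm_mult power_mult_distrib mult.assoc)
  ultimately show ?thesis by auto
qed

lemma W_add:
  assumes "W x" "W y"
  shows "W (\<lambda>n. x n + y n) \<and> Nm (\<lambda>n. x n + y n) \<le> Nm x + Nm y"
proof -
  have le: "(cmod (x n + y n))\<^sup>2 / \<omega> n \<le> 2 * ((cmod (x n))\<^sup>2 / \<omega> n) + 2 * ((cmod (y n))\<^sup>2 / \<omega> n)" for n
  proof -
    have "(cmod (x n + y n))\<^sup>2 \<le> (cmod (x n) + cmod (y n))\<^sup>2"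
      by (intro power_mono norm_triangle_ineq) auto
    also have "\<dots> \<le> 2 * (cmod (x n))\<^sup>2 + 2 * (cmod (y n))\<^sup>2"
      by (rule sq_bound)
    finally show ?thesis using pos[of n] by (simp add: divide_right_mono add_divide_distrib[symmetric])
  qed
  have sxy: "summable (\<lambda>n. 2 * ((cmod (x n))\<^sup>2 / \<omega> n) + 2 * ((cmod (y n))\<^sup>2 / \<omega> n))"
    using assms unfolding W_def by (intro summable_add summable_mult)
  have s: "summable (\<lambda>n. (cmod (x n + y n))\<^sup>2 / \<omega> n)"
    by (rule summ_le[OF sxy]) (use le pos in \<open>auto intro!: divide_nonneg_pos\<close>)
  define u where "u = (\<lambda>v n. cmod (v n) / sqrt (\<omega> n))"
  have sq: "(u v n)\<^sup>2 = (cmod (v n))\<^sup>2 / \<omega> n" for v n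
    using pos[of n] by (simp add: u_def power_divide)
  have part: "sqrt (sum (\<lambda>n. (cmod (v n))\<^sup>2 / \<omega> n) {..<K}) = L2_set (u v) {..<K}" for v K
    by (simp add: L2_set_def sq)
  have partle: "L2_set (u v) {..<K} \<le> Nm v" if "W v" for v K
  proof -
    have "sum (\<lambda>n. (cmod (v n))\<^sup>2 / \<omega> n) {..<K} \<le> (\<Sum>n. (cmod (v n))\<^sup>2 / \<omega> n)"
      using that pos unfolding W_def by (intro sum_le_suminf) (auto intro!: divide_nonneg_pos)
    thus ?thesis unfolding Nm_def part[symmetric] by simp
  qed
  have "(\<Sum>n. (cmod (x n + y n))\<^sup>2 / \<omega> n) \<le> (Nm x + Nm y)\<^sup>2"
  proof (rule suminf_le_const[OF s])
    fix K
    have "L2_set (u (\<lambda>n. x n + y n)) {..<K} \<le> L2_set (\<lambda>n. u x n + u y n) {..<K}"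
    proof (rule L2_set_mono)
      fix i
      show "0 \<le> u (\<lambda>n. x n + y n) i" using pos[of i] by (simp add: u_def)
      have "cmod (x i + y i) / sqrt (\<omega> i) \<le> (cmod (x i) + cmod (y i)) / sqrt (\<omega> i)"
        using pos[of i] by (intro divide_right_mono norm_triangle_ineq) auto
      thus "u (\<lambda>n. x n + y n) i \<le> u x i + u y i" by (simp add: u_def add_divide_distrib)
    qed
    also have "\<dots> \<le> L2_set (u x) {..<K} + L2_set (u y) {..<K}"
      by (rule L2_set_triangle_ineq)
    also have "\<dots> \<le> Nm x + Nm y" using partle assms by (intro add_mono) auto
    finally have "sqrt (sum (\<lambda>n. (cmod (x n + y n))\<^sup>2 / \<omega> n) {..<K}) \<le> Nm x + Nm y"
      using part by simp
    thus "sum (\<lambda>n. (cmod (x n + y n))\<^sup>2 / \<omega> n) {..<K} \<le> (Nm x + Nm y)\<^sup>2"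
    proof -
      have "0 \<le> sum (\<lambda>n. (cmod (x n + y n))\<^sup>2 / \<omega> n) {..<K}"
        using pos by (intro sum_nonneg) (auto intro!: divide_nonneg_pos)
      hence "sum (\<lambda>n. (cmod (x n + y n))\<^sup>2 / \<omega> n) {..<K} = (sqrt (sum (\<lambda>n. (cmod (x n + y n))\<^sup>2 / \<omega> n) {..<K}))\<^sup>2"
        by simp
      also have "\<dots> \<le> (Nm x + Nm y)\<^sup>2"
        using \<open>sqrt _ \<le> _\<close> by (intro power_mono) (auto intro!: real_sqrt_ge_zero sum_nonneg divide_nonneg_pos pos)
      finally show ?thesis .
    qed
  qed
  hence "Nm (\<lambda>n. x n + y n) \<le> sqrt ((Nm x + Nm y)\<^sup>2)" unfolding Nm_def by (rule real_sqrt_le_mono)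
  also have "\<dots> = Nm x + Nm y" using Nm_nonneg assms by simp
  finally show ?thesis using s W_def by auto
qed

end

definition sp :: "(nat \<Rightarrow> nat) \<Rightarrow> complex \<Rightarrow> nat \<Rightarrow> complex" where
  "sp p \<mu> n = (if n \<in> range p then \<mu> ^ (inv p n) else 0)"

definition ee :: "nat \<Rightarrow> nat \<Rightarrow> complex" where
  "ee k n = (if n = k then 1 else 0)"

definition P0 :: "nat \<Rightarrow> nat" where "P0 j = 2 ^ (j + 2)"
definition PM :: "nat \<Rightarrow> nat \<Rightarrow> nat" where "PM m j = (6 * m + 4) * 2 ^ j"
definition QM :: "nat \<Rightarrow> nat \<Rightarrow> nat" where "QM m j = (2 * m + 1) * 2 ^ j"

definition Hc :: "nat \<Rightarrow> complex \<Rightarrow> nat \<Rightarrow> complex" where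
  "Hc m \<mu> = (if m = 0 then sp P0 \<mu> else (\<lambda>n. sp (PM m) \<mu> n - sp (QM m) \<mu> n))"

definition vv :: "nat \<Rightarrow> nat \<Rightarrow> nat \<Rightarrow> complex" where
  "vv m j = (if m = 0 then ee (P0 j) else (\<lambda>n. ee (PM m j) n - ee (QM m j) n))"

lemma sm_P0: "strict_mono P0"
  unfolding P0_def by (intro strict_monoI) (simp add: power_strict_increasing)
lemma sm_PM: "strict_mono (PM m)"
  unfolding PM_def by (intro strict_monoI mult_strict_left_mono power_strict_increasing) auto
lemma sm_QM: "strict_mono (QM m)"
  unfolding QM_def by (intro strict_monoI mult_strict_left_mono power_strict_increasing) auto

lemma sp_at: "strict_mono p \<Longrightarrow> sp p \<mu> (p j) = \<mu> ^ j"
  using strict_mono_imp_inj_on[of p UNIV] by (simp add: sp_def)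

lemma sp_off: "n \<notin> range p \<Longrightarrow> sp p \<mu> n = 0"
  by (simp add: sp_def)

lemma sp_sums:
  assumes "strict_mono p" "cmod \<mu> \<le> 1" "cmod z < 1"
  shows "(\<lambda>n. sp p \<mu> n * z ^ n) sums (\<Sum>j. \<mu> ^ j * z ^ p j)"
proof -
  have pj: "j \<le> p j" for j using assms(1) by (rule strict_mono_imp_increasing)
  have "summable (\<lambda>j. \<mu> ^ j * z ^ p j)"
  proof (rule summable_comparison_test'[where N=0])
    show "summable (\<lambda>j. cmod z ^ j)" using assms(3) by (simp add: summable_geometric)
    fix j
    have "cmod (\<mu> ^ j * z ^ p j) = cmod \<mu> ^ j * cmod z ^ p j" by (simp add: norm_mult norm_power)
    also have "\<dots> \<le> 1 * cmod z ^ j"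
      using assms pj by (intro mult_mono power_le_one power_decreasing) auto
    finally show "norm (\<mu> ^ j * z ^ p j) \<le> cmod z ^ j" by simp
  qed
  hence "(\<lambda>j. \<mu> ^ j * z ^ p j) sums (\<Sum>j. \<mu> ^ j * z ^ p j)" by (rule summable_sums)
  hence "(\<lambda>j. sp p \<mu> (p j) * z ^ p j) sums (\<Sum>j. \<mu> ^ j * z ^ p j)"
    using sp_at[OF assms(1)] by simp
  thus ?thesis
    by (subst sums_mono_reindex[OF assms(1), symmetric]) (auto simp: sp_off)
qed

context wt
begin

lemma W_sp:
  assumes "strict_mono p" "cmod \<mu> < 1"
  shows "W (sp p \<mu>)"
proof -
  define f where "f n = (cmod (sp p \<mu> n))\<^sup>2 / \<omega> n" for n
  have "summable (\<lambda>j. f (p j))"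
  proof (rule summ_le)
    show "summable (\<lambda>j. ((cmod \<mu>)\<^sup>2) ^ j / c)"
      using assms(2) by (intro summable_divide summable_geometric) (simp add: abs_square_less_1)
    fix j
    show "0 \<le> f (p j)" unfolding f_def using pos by (auto intro!: divide_nonneg_pos)
    have "f (p j) = ((cmod \<mu>)\<^sup>2) ^ j / \<omega> (p j)"
      unfolding f_def using sp_at[OF assms(1)] by (simp add: norm_power power_mult[symmetric] power_mult_distrib mult.commute)
    also have "\<dots> \<le> ((cmod \<mu>)\<^sup>2) ^ j / c"
      using lb cpos by (intro divide_left_mono) (auto intro: mult_pos_pos less_le_trans)
    finally show "f (p j) \<le> ((cmod \<mu>)\<^sup>2) ^ j / c" .
  qed
  then obtain s where "(\<lambda>j. f (p j)) sums s" by (auto simp: summable_def)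
  hence "f sums s"
    by (subst (asm) sums_mono_reindex[OF assms(1)]) (auto simp: f_def sp_off)
  thus ?thesis unfolding W_def f_def by (auto simp: summable_def)
qed

lemma W_ee: "W (ee k) \<and> Nm (ee k) = sqrt (1 / \<omega> k)"
proof -
  have "(\<lambda>n. (cmod (ee k n))\<^sup>2 / \<omega> n) = (\<lambda>n. if n = k then 1 / \<omega> k else 0)"
    by (auto simp: ee_def)
  moreover have "(\<lambda>n. if n = k then 1 / \<omega> k else 0) sums (1 / \<omega> k)" by (rule sums_single)
  ultimately show ?thesis unfolding W_def Nm_def by (auto simp: sums_iff)
qed

lemma W_diff:
  assumes "W x" "W y"
  shows "W (\<lambda>n. x n - y n) \<and> Nm (\<lambda>n. x n - y n) \<le> Nm x + Nm y"
proof -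
  have my: "W (\<lambda>n. (-1) * y n) \<and> Nm (\<lambda>n. (-1) * y n) = Nm y"
    using W_scale[OF assms(2), of "-1"] by simp
  show ?thesis using W_add[OF assms(1) my[THEN conjunct1]] my by simp
qed

lemma W_Hc: "cmod \<mu> < 1 \<Longrightarrow> W (Hc m \<mu>)"
  unfolding Hc_def using W_sp[OF sm_P0] W_sp[OF sm_PM] W_sp[OF sm_QM] W_diff by auto

lemma W_vv: "W (vv m j)"
  unfolding vv_def using W_ee W_diff by auto

end

lemma tail_pt:
  assumes p: "strict_mono p" and t: "0 < t" "t \<le> 1/2"
  shows "cmod ((1 / complex_of_real t ^ N) * (sp p (of_real t) n - (\<Sum>j\<le>N. of_real t ^ j * ee (p j) n)))
           \<le> t * 2 ^ (N + 1) * cmod (sp p (1/2) n)"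
proof (cases "n \<in> range p")
  case False
  hence "ee (p j) n = 0" for j by (auto simp: ee_def)
  thus ?thesis using False by (simp add: sp_off)
next
  case True
  then obtain J where n: "n = p J" by auto
  have e: "ee (p j) (p J) = (if j = J then 1 else 0)" for j
    using strict_mono_eq[OF p] by (simp add: ee_def)
  have s: "(\<Sum>j\<le>N. complex_of_real t ^ j * ee (p j) (p J)) = (if J \<le> N then of_real t ^ J else 0)"
    by (simp add: e if_distrib cong: if_cong)
  show ?thesis
  proof (cases "J \<le> N")
    case True
    thus ?thesis using n s sp_at[OF p] t by simp
  next
    case False
    then obtain d where d: "J = N + 1 + d" by (metis add.assoc le_Suc_ex not_le Suc_eq_plus1 less_eq_Suc_le)
    have "cmod ((1 / complex_of_real t ^ N) * (sp p (of_real t) n - (\<Sum>j\<le>N. of_real t ^ j * ee (p j) n)))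
        = cmod ((1 / complex_of_real t ^ N) * (of_real t ^ J))"
      using n s sp_at[OF p] False by simp
    also have "(1 / complex_of_real t ^ N) * (of_real t ^ J) = of_real (t ^ (d + 1))"
      using t by (simp add: d power_add field_simps)
    also have "cmod (complex_of_real (t ^ (d + 1))) = t ^ (d + 1)" using t by (simp only: norm_of_real) simp
    also have "t ^ (d + 1) = t * t ^ d" by simp
    also have "\<dots> \<le> t * (1/2) ^ d" using t by (intro mult_left_mono power_mono) auto
    also have "cmod (sp p (1/2) n) = (1/2) ^ J" using n sp_at[OF p] by (simp add: norm_power)
    hence "t * (1/2) ^ d = t * 2 ^ (N + 1) * cmod (sp p (1/2) n)"
      by (simp add: d power_add field_simps)
    finally show ?thesis .
  qed
qed

lemma sum_split_add: "(\<Sum>i<k1+k2. g i) = (\<Sum>i<k1. g i) + (\<Sum>i<k2. g (k1 + i))"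
  for g :: "nat \<Rightarrow> 'a::comm_monoid_add"
proof -
  have "(\<Sum>i<k1+k2. g i) = sum g {0..<k1} + sum g {k1..<k1+k2}"
    by (simp add: sum.atLeastLessThan_concat atLeast0LessThan[symmetric])
  also have "sum g {k1..<k1+k2} = (\<Sum>i<k2. g (k1+i))"
    using sum.shift_bounds_nat_ivl[of g 0 k1 k2] by (simp add: atLeast0LessThan add.commute)
  finally show ?thesis by (simp add: atLeast0LessThan)
qed

inductive_set Sp :: "(nat \<Rightarrow> complex) set" where
  Sp0: "(\<lambda>n. 0) \<in> Sp"
| SpH: "\<mu> \<in> ball 0 1 \<Longrightarrow> Hc m \<mu> \<in> Sp"
| SpA: "x \<in> Sp \<Longrightarrow> y \<in> Sp \<Longrightarrow> (\<lambda>n. x n + y n) \<in> Sp"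
| SpS: "x \<in> Sp \<Longrightarrow> (\<lambda>n. a * x n) \<in> Sp"

lemma Sp_repr:
  assumes "s \<in> Sp"
  shows "\<exists>(k::nat) a ms \<mu>s. (\<forall>i<k. \<mu>s i \<in> ball 0 1) \<and> s = (\<lambda>n. \<Sum>i<k. a i * Hc (ms i) (\<mu>s i) n)"
  using assms
proof induction
  case Sp0
  show ?case by (rule exI[of _ "0::nat"]) simp
next
  case (SpH \<mu> m)
  show ?case
    by (rule exI[of _ 1], rule exI[of _ "\<lambda>_. 1"], rule exI[of _ "\<lambda>_. m"], rule exI[of _ "\<lambda>_. \<mu>"])
       (use SpH in auto)
next
  case (SpA x y)
  obtain k1 :: nat and a1 ms1 \<mu>s1 where
    1: "\<forall>i<k1. \<mu>s1 i \<in> ball 0 1" "x = (\<lambda>n. \<Sum>i<k1. a1 i * Hc (ms1 i) (\<mu>s1 i) n)"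
    using SpA.IH(1) by blast
  obtain k2 :: nat and a2 ms2 \<mu>s2 where
    2: "\<forall>i<k2. \<mu>s2 i \<in> ball 0 1" "y = (\<lambda>n. \<Sum>i<k2. a2 i * Hc (ms2 i) (\<mu>s2 i) n)"
    using SpA.IH(2) by blast
  define a where "a i = (if i < k1 then a1 i else a2 (i - k1))" for i
  define ms where "ms i = (if i < k1 then ms1 i else ms2 (i - k1))" for i
  define \<mu>s where "\<mu>s i = (if i < k1 then \<mu>s1 i else \<mu>s2 (i - k1))" for i
  have "(\<lambda>n. x n + y n) = (\<lambda>n. \<Sum>i<k1 + k2. a i * Hc (ms i) (\<mu>s i) n)"
  proof
    fix n
    have "(\<Sum>i<k1 + k2. a i * Hc (ms i) (\<mu>s i) n)
        = (\<Sum>i<k1. a i * Hc (ms i) (\<mu>s i) n) + (\<Sum>i<k2. a (k1 + i) * Hc (ms (k1 + i)) (\<mu>s (k1 + i)) n)"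
      by (rule sum_split_add)
    also have "\<dots> = x n + y n" using 1 2 by (simp add: a_def ms_def \<mu>s_def)
    finally show "x n + y n = (\<Sum>i<k1 + k2. a i * Hc (ms i) (\<mu>s i) n)" by simp
  qed
  moreover have "\<forall>i<k1 + k2. \<mu>s i \<in> ball 0 1" using 1 2 by (auto simp: \<mu>s_def)
  ultimately show ?case by blast
next
  case (SpS x b)
  then obtain k :: nat and a ms \<mu>s where "\<forall>i<k. \<mu>s i \<in> ball 0 1" "x = (\<lambda>n. \<Sum>i<k. a i * Hc (ms i) (\<mu>s i) n)"
    by blast
  thus ?case
    by (intro exI[of _ k] exI[of _ "\<lambda>i. b * a i"] exI[of _ ms] exI[of _ \<mu>s])
       (auto simp: sum_distrib_left mult.assoc)
qed

context wt
begin

lemma Sp_W: "s \<in> Sp \<Longrightarrow> W s"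
proof (induction rule: Sp.induct)
  case Sp0
  show ?case unfolding W_def by simp
next
  case (SpH \<mu> m) thus ?case by (intro W_Hc) auto
next
  case (SpA x y) thus ?case using W_add by blast
next
  case (SpS x a) thus ?case using W_scale by blast
qed

definition A :: "(nat \<Rightarrow> complex) set" where
  "A = {x. W x \<and> (\<forall>\<epsilon>>0. \<exists>s\<in>Sp. Nm (\<lambda>n. x n - s n) < \<epsilon>)}"

lemma Nm_zero: "Nm (\<lambda>n. 0) = 0" by (simp add: Nm_def)

lemma A_I: "W x \<Longrightarrow> (\<And>\<epsilon>. \<epsilon> > 0 \<Longrightarrow> \<exists>s\<in>Sp. Nm (\<lambda>n. x n - s n) < \<epsilon>) \<Longrightarrow> x \<in> A"
  by (simp add: A_def)

lemma A_E: "x \<in> A \<Longrightarrow> \<epsilon> > 0 \<Longrightarrow> \<exists>s\<in>Sp. Nm (\<lambda>n. x n - s n) < \<epsilon>"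
  by (simp add: A_def)

lemma W_tri:
  assumes "W x" "W y" "W z"
  shows "Nm (\<lambda>n. x n - z n) \<le> Nm (\<lambda>n. x n - y n) + Nm (\<lambda>n. y n - z n)"
proof -
  have "(\<lambda>n. x n - z n) = (\<lambda>n. (x n - y n) + (y n - z n))" by auto
  moreover have "W (\<lambda>n. x n - y n)" "W (\<lambda>n. y n - z n)" using W_diff assms by blast+
  ultimately show ?thesis using W_add[of "\<lambda>n. x n - y n" "\<lambda>n. y n - z n"] by simp
qed

lemma Sp_A: "s \<in> Sp \<Longrightarrow> s \<in> A"
proof (rule A_I)
  assume s: "s \<in> Sp"
  show "W s" using Sp_W s by blast
  fix \<epsilon> :: real assume "\<epsilon> > 0"
  thus "\<exists>s'\<in>Sp. Nm (\<lambda>n. s n - s' n) < \<epsilon>" using s Nm_zero by (intro bexI[of _ s]) auto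
qed

lemma A_closed:
  assumes "W x" "\<And>\<epsilon>. \<epsilon> > 0 \<Longrightarrow> \<exists>y\<in>A. Nm (\<lambda>n. x n - y n) < \<epsilon>"
  shows "x \<in> A"
  unfolding A_def
proof (intro CollectI conjI allI impI assms(1))
  fix \<epsilon> :: real assume e: "\<epsilon> > 0"
  obtain y where y: "y \<in> A" "Nm (\<lambda>n. x n - y n) < \<epsilon>/2" using assms(2)[of "\<epsilon>/2"] e by auto
  obtain s where s: "s \<in> Sp" "Nm (\<lambda>n. y n - s n) < \<epsilon>/2" using A_E[OF y(1) half_gt_zero[OF e]] by blast
  have "Nm (\<lambda>n. x n - s n) \<le> Nm (\<lambda>n. x n - y n) + Nm (\<lambda>n. y n - s n)"
    using W_tri[OF assms(1) _ Sp_W[OF s(1)]] y(1) unfolding A_def by blast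
  hence "Nm (\<lambda>n. x n - s n) < \<epsilon>" using y(2) s(2) by linarith
  thus "\<exists>s\<in>Sp. Nm (\<lambda>n. x n - s n) < \<epsilon>" using s(1) by blast
qed

lemma A_W: "x \<in> A \<Longrightarrow> W x" unfolding A_def by auto

lemma A_add:
  assumes "x \<in> A" "y \<in> A" shows "(\<lambda>n. x n + y n) \<in> A"
  unfolding A_def
proof (intro CollectI conjI allI impI)
  show "W (\<lambda>n. x n + y n)" using W_add[OF A_W[OF assms(1)] A_W[OF assms(2)]] by blast
  fix \<epsilon> :: real assume e: "\<epsilon> > 0"
  obtain s1 where s1: "s1 \<in> Sp" "Nm (\<lambda>n. x n - s1 n) < \<epsilon>/2" using A_E[OF assms(1) half_gt_zero[OF e]] by blast
  obtain s2 where s2: "s2 \<in> Sp" "Nm (\<lambda>n. y n - s2 n) < \<epsilon>/2" using A_E[OF assms(2) half_gt_zero[OF e]] by blast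
  have eq: "(\<lambda>n. x n + y n - (s1 n + s2 n)) = (\<lambda>n. (x n - s1 n) + (y n - s2 n))" by (auto simp: algebra_simps)
  have "Nm (\<lambda>n. x n + y n - (s1 n + s2 n)) \<le> Nm (\<lambda>n. x n - s1 n) + Nm (\<lambda>n. y n - s2 n)"
  proof -
    have w1: "W (\<lambda>n. x n - s1 n)" using W_diff[OF A_W[OF assms(1)] Sp_W[OF s1(1)]] by blast
    have w2: "W (\<lambda>n. y n - s2 n)" using W_diff[OF A_W[OF assms(2)] Sp_W[OF s2(1)]] by blast
    show ?thesis unfolding eq using W_add[OF w1 w2] by blast
  qed
  thus "\<exists>s\<in>Sp. Nm (\<lambda>n. x n + y n - s n) < \<epsilon>"
    using s1 s2 by (intro bexI[of _ "\<lambda>n. s1 n + s2 n"]) (auto intro: Sp.SpA)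
qed

lemma A_scale:
  assumes "x \<in> A" shows "(\<lambda>n. a * x n) \<in> A"
  unfolding A_def
proof (intro CollectI conjI allI impI)
  show "W (\<lambda>n. a * x n)" using W_scale[OF A_W[OF assms]] by blast
  fix \<epsilon> :: real assume e: "\<epsilon> > 0"
  obtain s where s: "s \<in> Sp" "Nm (\<lambda>n. x n - s n) < \<epsilon>/(cmod a + 1)"
  proof -
    have "\<epsilon>/(cmod a + 1) > 0" using e by (intro divide_pos_pos) (auto intro: add_nonneg_pos)
    thus ?thesis using A_E[OF assms] that by blast
  qed
  have eq: "(\<lambda>n. a * x n - a * s n) = (\<lambda>n. a * (x n - s n))" by (auto simp: algebra_simps)
  have W1: "W (\<lambda>n. x n - s n)" using W_diff[OF A_W[OF assms] Sp_W[OF s(1)]] by blast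
  have "Nm (\<lambda>n. a * x n - a * s n) = cmod a * Nm (\<lambda>n. x n - s n)"
    unfolding eq using W_scale[OF W1] by blast
  also have "\<dots> \<le> cmod a * (\<epsilon>/(cmod a + 1))" using s by (intro mult_left_mono) auto
  also have "\<dots> < \<epsilon>"
  proof -
    have d: "cmod a + 1 > 0" by (simp add: add_nonneg_pos)
    have "cmod a * \<epsilon> < (cmod a + 1) * \<epsilon>" using e by (intro mult_strict_right_mono) auto
    thus ?thesis using d by (simp add: field_simps)
  qed
  finally show "\<exists>s\<in>Sp. Nm (\<lambda>n. a * x n - s n) < \<epsilon>"
    using s by (intro bexI[of _ "\<lambda>n. a * s n"]) (auto intro: Sp.SpS)
qed

lemma A_zero: "(\<lambda>n. 0) \<in> A" by (rule Sp_A) (rule Sp.Sp0)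

lemma A_diff:
  assumes "x \<in> A" "y \<in> A" shows "(\<lambda>n. x n - y n) \<in> A"
  using A_add[OF assms(1) A_scale[OF assms(2), of "-1"]] by simp

lemma A_sum:
  assumes "finite I" "\<And>i. i \<in> I \<Longrightarrow> f i \<in> A"
  shows "(\<lambda>n. \<Sum>i\<in>I. f i n) \<in> A"
  using assms
proof (induction I rule: finite_induct)
  case empty thus ?case using A_zero by simp
next
  case (insert i I)
  thus ?case using A_add[of "f i" "\<lambda>n. \<Sum>i\<in>I. f i n"] by simp
qed

end

definition dP :: "(nat \<Rightarrow> nat) \<Rightarrow> real \<Rightarrow> nat \<Rightarrow> nat \<Rightarrow> complex" where
  "dP p t N = (\<lambda>n. (1 / complex_of_real t ^ N) * (sp p (of_real t) n - (\<Sum>j\<le>N. of_real t ^ j * ee (p j) n)))"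

context wt
begin

lemma dP_bound:
  assumes p: "strict_mono p" and t: "0 < t" "t \<le> 1/2"
  shows "W (dP p t N) \<and> Nm (dP p t N) \<le> (t * 2 ^ (N + 1)) * Nm (sp p (1/2))"
proof (rule W_bound)
  show "W (sp p (1/2))" using W_sp[OF p, of "1/2"] by simp
  show "0 \<le> t * 2 ^ (N + 1)" using t by simp
  fix n show "cmod (dP p t N n) \<le> t * 2 ^ (N + 1) * cmod (sp p (1/2) n)"
    unfolding dP_def using tail_pt[OF p t] by simp
qed

lemma vv_eq:
  assumes t: "t \<noteq> 0"
  shows "(\<lambda>n. vv m N n - (1 / complex_of_real t ^ N) * (Hc m (of_real t) n - (\<Sum>j<N. of_real t ^ j * vv m j n)))
       = (if m = 0 then (\<lambda>n. (-1) * dP P0 t N n) else (\<lambda>n. dP (QM m) t N n - dP (PM m) t N n))"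
proof (rule ext)
  fix n
  define T where "T = complex_of_real t"
  have T: "T \<noteq> 0" using t by (simp add: T_def)
  have gen: "vv m N n - (1 / T ^ N) * (Hc m T n - (\<Sum>j<N. T ^ j * vv m j n))
        = (-1) * ((1 / T ^ N) * (Hc m T n - (\<Sum>j\<le>N. T ^ j * vv m j n)))"
    using T by (simp add: lessThan_Suc_atMost[symmetric] field_simps)
  show "vv m N n - (1 / complex_of_real t ^ N) * (Hc m (of_real t) n - (\<Sum>j<N. of_real t ^ j * vv m j n))
       = (if m = 0 then (\<lambda>n. (-1) * dP P0 t N n) else (\<lambda>n. dP (QM m) t N n - dP (PM m) t N n)) n"
  proof (cases "m = 0")
    case True
    thus ?thesis using gen unfolding T_def[symmetric] dP_def by (simp add: Hc_def vv_def)
  next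
    case False
    have hs: "(\<Sum>j\<le>N. T ^ j * vv m j n) = (\<Sum>j\<le>N. T ^ j * ee (PM m j) n) - (\<Sum>j\<le>N. T ^ j * ee (QM m j) n)"
      using False by (simp add: vv_def right_diff_distrib sum_subtractf)
    have hc: "Hc m T n = sp (PM m) T n - sp (QM m) T n" using False by (simp add: Hc_def)
    have "(-1) * ((1 / T ^ N) * (Hc m T n - (\<Sum>j\<le>N. T ^ j * vv m j n)))
        = dP (QM m) t N n - dP (PM m) t N n"
      unfolding dP_def T_def[symmetric] hs hc by (simp add: algebra_simps)
    thus ?thesis using gen False unfolding T_def[symmetric] by simp
  qed
qed

lemma vv_A: "vv m N \<in> A"
proof (induction N rule: less_induct)
  case (less N)
  define y where "y t = (\<lambda>n. (1 / complex_of_real t ^ N) * (Hc m (of_real t) n - (\<Sum>j<N. of_real t ^ j * vv m j n)))" for t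
  have yA: "y t \<in> A" if t: "0 < t" "t \<le> 1/2" for t
  proof -
    have "Hc m (of_real t) \<in> A" using t by (intro Sp_A Sp.SpH) auto
    moreover have "(\<lambda>n. \<Sum>j<N. of_real t ^ j * vv m j n) \<in> A"
      by (rule A_sum) (auto intro!: A_scale less.IH)
    ultimately show ?thesis unfolding y_def by (intro A_scale A_diff)
  qed
  define K where "K = 2 ^ (N + 1) * (Nm (sp P0 (1/2)) + Nm (sp (PM m) (1/2)) + Nm (sp (QM m) (1/2)))"
  have K0: "K \<ge> 0" unfolding K_def
    using Nm_nonneg W_sp[OF sm_P0, of "1/2"] W_sp[OF sm_PM, of "1/2"] W_sp[OF sm_QM, of "1/2"]
    by (intro mult_nonneg_nonneg add_nonneg_nonneg) auto
  have bnd: "Nm (\<lambda>n. vv m N n - y t n) \<le> t * K" if t: "0 < t" "t \<le> 1/2" for t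
  proof (cases "m = 0")
    case True
    have d: "W (dP P0 t N)" "Nm (dP P0 t N) \<le> t * 2 ^ (N + 1) * Nm (sp P0 (1/2))"
      using dP_bound[OF sm_P0 t, of N] by auto
    have "Nm (\<lambda>n. vv m N n - y t n) = Nm (\<lambda>n. (-1) * dP P0 t N n)"
      using vv_eq[of t m N] t True unfolding y_def by simp
    also have "\<dots> = Nm (dP P0 t N)" using W_scale[OF d(1), of "-1"] by simp
    also have "\<dots> \<le> t * K"
    proof -
      have "t * K = t * 2^(N+1) * Nm (sp P0 (1/2)) + t * 2^(N+1) * (Nm (sp (PM m) (1/2)) + Nm (sp (QM m) (1/2)))"
        unfolding K_def by (simp add: algebra_simps)
      moreover have "0 \<le> t * 2^(N+1) * (Nm (sp (PM m) (1/2)) + Nm (sp (QM m) (1/2)))"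
        using t Nm_nonneg W_sp[OF sm_PM, of "1/2"] W_sp[OF sm_QM, of "1/2"]
        by (intro mult_nonneg_nonneg add_nonneg_nonneg) auto
      ultimately show ?thesis using d(2) by linarith
    qed
    finally show ?thesis .
  next
    case False
    have d1: "W (dP (PM m) t N)" "Nm (dP (PM m) t N) \<le> t * 2 ^ (N + 1) * Nm (sp (PM m) (1/2))"
      using dP_bound[OF sm_PM[of m] t, of N] by auto
    have d2: "W (dP (QM m) t N)" "Nm (dP (QM m) t N) \<le> t * 2 ^ (N + 1) * Nm (sp (QM m) (1/2))"
      using dP_bound[OF sm_QM[of m] t, of N] by auto
    have "Nm (\<lambda>n. vv m N n - y t n) = Nm (\<lambda>n. dP (QM m) t N n - dP (PM m) t N n)"
      using vv_eq[of t m N] t False unfolding y_def by simp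
    also have "\<dots> \<le> Nm (dP (QM m) t N) + Nm (dP (PM m) t N)"
      using W_diff[OF d2(1) d1(1)] by simp
    also have "\<dots> \<le> t * K"
    proof -
      have "t * K = t * 2^(N+1) * Nm (sp P0 (1/2)) + t * 2^(N+1) * Nm (sp (PM m) (1/2)) + t * 2^(N+1) * Nm (sp (QM m) (1/2))"
        unfolding K_def by (simp add: algebra_simps)
      moreover have "0 \<le> t * 2^(N+1) * Nm (sp P0 (1/2))"
        using t Nm_nonneg W_sp[OF sm_P0, of "1/2"] by (intro mult_nonneg_nonneg) auto
      ultimately show ?thesis using d1(2) d2(2) by linarith
    qed
    finally show ?thesis .
  qed
  show ?case
  proof (rule A_closed)
    show "W (vv m N)" by (rule W_vv)
    fix \<epsilon> :: real assume e: "\<epsilon> > 0"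
    define t where "t = min (1/2) (\<epsilon> / (K + 1))"
    have "\<epsilon> / (K + 1) > 0" using e K0 by (intro divide_pos_pos) auto
    hence t: "0 < t" "t \<le> 1/2" unfolding t_def by (auto simp: min_def)
    have "t * K \<le> (\<epsilon> / (K + 1)) * K" using K0 by (intro mult_right_mono) (auto simp: t_def)
    also have "\<dots> < \<epsilon>"
    proof -
      have "K * \<epsilon> < (K + 1) * \<epsilon>" using e by (intro mult_strict_right_mono) auto
      thus ?thesis using K0 by (simp add: field_simps)
    qed
    finally show "\<exists>y\<in>A. Nm (\<lambda>n. vv m N n - y n) < \<epsilon>"
      using bnd[OF t] yA[OF t] by (intro bexI[of _ "y t"]) auto
  qed
qed

end

lemma odd_decomp: "(k::nat) > 0 \<Longrightarrow> \<exists>q n. odd q \<and> k = q * 2 ^ n"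
proof (induction k rule: less_induct)
  case (less k)
  show ?case
  proof (cases "even k")
    case False thus ?thesis by (intro exI[of _ k] exI[of _ "0::nat"]) auto
  next
    case True
    then obtain h where h: "k = 2 * h" by blast
    with less.prems have "h > 0" "h < k" by auto
    then obtain q n where "odd q" "h = q * 2 ^ n" using less.IH by blast
    thus ?thesis using h by (intro exI[of _ q] exI[of _ "Suc n"]) auto
  qed
qed

context wt
begin

lemma step:
  assumes k: "k \<ge> 3"
  shows "ee k \<in> A \<or> (\<exists>k'. k' > k \<and> k' \<ge> 3 \<and> (\<lambda>n. ee k' n - ee k n) \<in> A)"
proof -
  obtain q n where q: "odd q" "k = q * 2 ^ n" using odd_decomp[of k] k by auto
  show ?thesis
  proof (cases "q = 1")
    case True
    hence kn: "k = 2 ^ n" using q by simp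
    have "n \<ge> 2"
    proof (rule ccontr)
      assume "\<not> n \<ge> 2"
      hence "n = 0 \<or> n = 1" by auto
      thus False using k kn by auto
    qed
    hence e2: "n - 2 + 2 = n" by simp
    have "P0 (n - 2) = k" unfolding P0_def e2 kn ..
    hence "vv 0 (n - 2) = ee k" by (simp add: vv_def)
    thus ?thesis using vv_A[of 0 "n - 2"] by simp
  next
    case False
    define m where "m = q div 2"
    have om: "q = 2 * m + 1" using q(1) by (simp add: m_def)
    hence m0: "m \<noteq> 0" using False by auto
    have "QM m n = k" using q om by (simp add: QM_def)
    moreover have "PM m n > k"
    proof -
      have "2 * m + 1 < 6 * m + 4" by simp
      hence "(2 * m + 1) * 2 ^ n < (6 * m + 4) * 2 ^ n" by (intro mult_strict_right_mono) auto
      thus ?thesis using q om by (simp only: PM_def)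
    qed
    ultimately have "vv m n = (\<lambda>x. ee (PM m n) x - ee k x)" "PM m n > k" using m0 by (auto simp: vv_def)
    thus ?thesis using vv_A[of m n] k by (intro disjI2 exI[of _ "PM m n"]) auto
  qed
qed

lemma ee_A:
  assumes k: "k \<ge> 3"
  shows "ee k \<in> A"
proof (rule ccontr)
  assume nA: "ee k \<notin> A"
  define T where "T j = (SOME j'. j' > j \<and> j' \<ge> 3 \<and> (\<lambda>n. ee j' n - ee j n) \<in> A)" for j
  have Tprop: "T j > j \<and> T j \<ge> 3 \<and> (\<lambda>n. ee (T j) n - ee j n) \<in> A"
    if j: "j \<ge> 3" "(\<lambda>n. ee j n - ee k n) \<in> A" for j
  proof -
    have "ee j \<notin> A"
    proof
      assume "ee j \<in> A"
      hence "(\<lambda>n. ee j n - (ee j n - ee k n)) \<in> A" using A_diff j(2) by blast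
      thus False using nA by simp
    qed
    hence "\<exists>j'. j' > j \<and> j' \<ge> 3 \<and> (\<lambda>n. ee j' n - ee j n) \<in> A" using step[OF j(1)] by blast
    thus ?thesis unfolding T_def by (rule someI_ex)
  qed
  define kk where "kk i = (T ^^ i) k" for i
  have inv: "kk i \<ge> 3 \<and> (\<lambda>n. ee (kk i) n - ee k n) \<in> A" for i
  proof (induction i)
    case 0
    thus ?case using k A_zero by (simp add: kk_def)
  next
    case (Suc i)
    have P: "T (kk i) > kk i \<and> T (kk i) \<ge> 3 \<and> (\<lambda>n. ee (T (kk i)) n - ee (kk i) n) \<in> A"
      using Tprop Suc by blast
    have "(\<lambda>n. (ee (T (kk i)) n - ee (kk i) n) + (ee (kk i) n - ee k n)) \<in> A"
      using A_add P Suc by blast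
    thus ?case using P by (simp add: kk_def)
  qed
  have incr: "kk (Suc i) > kk i" for i using Tprop inv by (simp add: kk_def)
  have sm: "strict_mono kk" using incr by (simp add: strict_mono_Suc_iff)
  have "ee k \<in> A"
  proof (rule A_closed)
    show "W (ee k)" using W_ee by blast
    fix \<epsilon> :: real assume e: "\<epsilon> > 0"
    define M :: nat where "M = nat \<lceil>1 / (c * \<epsilon>\<^sup>2)\<rceil> + 1"
    have M0: "M > 0" by (simp add: M_def)
    have Mbig: "1 / (c * \<epsilon>\<^sup>2) < real M"
      unfolding M_def by linarith
    define y where "y = (\<lambda>n. (- 1 / of_nat M) * (\<Sum>i<M. (ee (kk i) n - ee k n)))"
    have yA: "y \<in> A" unfolding y_def using inv by (intro A_scale A_sum) auto
    define KS where "KS = kk ` {..<M}"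
    have cardKS: "card KS = M" unfolding KS_def
      using strict_mono_imp_inj_on[OF sm] by (simp add: card_image inj_on_subset)
    have sum_ee: "(\<Sum>i<M. ee (kk i) n) = (if n \<in> KS then 1 else 0)" for n
    proof (cases "n \<in> KS")
      case True
      then obtain i0 where i0: "i0 < M" "n = kk i0" by (auto simp: KS_def)
      have "(\<Sum>i<M. ee (kk i) n) = (\<Sum>i<M. if i = i0 then 1 else 0)"
        using strict_mono_eq[OF sm] i0 by (intro sum.cong) (auto simp: ee_def)
      thus ?thesis using True i0 by simp
    next
      case False
      hence "\<And>i. i < M \<Longrightarrow> ee (kk i) n = 0" by (auto simp: ee_def KS_def)
      thus ?thesis using False by simp
    qed
    have diff_eq: "(\<lambda>n. ee k n - y n) = (\<lambda>n. (1 / of_nat M) * (if n \<in> KS then 1 else 0))"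
    proof
      fix n
      have "(\<Sum>i<M. (ee (kk i) n - ee k n)) = (\<Sum>i<M. ee (kk i) n) - of_nat M * ee k n"
        by (simp add: sum_subtractf)
      thus "ee k n - y n = (1 / of_nat M) * (if n \<in> KS then 1 else 0)"
        unfolding y_def using M0 sum_ee[of n] by (simp add: field_simps)
    qed
    have terms: "(\<lambda>n. (cmod ((1 / of_nat M) * (if n \<in> KS then 1 else 0 :: complex)))\<^sup>2 / \<omega> n)
               = (\<lambda>n. if n \<in> KS then 1 / ((real M)\<^sup>2 * \<omega> n) else 0)"
      by (auto simp: norm_divide power_divide)
    have "(\<Sum>n. if n \<in> KS then 1 / ((real M)\<^sup>2 * \<omega> n) else 0) = (\<Sum>n\<in>KS. 1 / ((real M)\<^sup>2 * \<omega> n))"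
      by (subst suminf_finite[of KS]) (auto simp: KS_def intro!: sum.cong)
    also have "\<dots> \<le> (\<Sum>n\<in>KS. 1 / ((real M)\<^sup>2 * c))"
      using M0 cpos lb pos by (intro sum_mono divide_left_mono mult_left_mono mult_pos_pos) auto
    also have "\<dots> = 1 / (real M * c)" using cardKS M0 by (simp add: power2_eq_square)
    also have "\<dots> < \<epsilon>\<^sup>2"
    proof -
      have "1 < real M * (c * \<epsilon>\<^sup>2)" using Mbig cpos e by (simp add: field_simps)
      thus ?thesis using M0 cpos e by (simp add: field_simps)
    qed
    finally have "Nm (\<lambda>n. ee k n - y n) < sqrt (\<epsilon>\<^sup>2)"
      unfolding Nm_def diff_eq terms by (rule real_sqrt_less_mono)
    hence "Nm (\<lambda>n. ee k n - y n) < \<epsilon>" using e by simp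
    thus "\<exists>y\<in>A. Nm (\<lambda>n. ee k n - y n) < \<epsilon>" using yA by blast
  qed
  thus False using nA by simp
qed

lemma coef_A:
  assumes w: "W x" and z: "\<And>n. n < 3 \<Longrightarrow> x n = 0"
  shows "x \<in> A"
proof (rule A_closed[OF w])
  fix \<epsilon> :: real assume e: "\<epsilon> > 0"
  define f where "f n = (cmod (x n))\<^sup>2 / \<omega> n" for n
  have sf: "summable f" using w unfolding W_def by (simp add: f_def[abs_def])
  obtain K0 where K0: "\<forall>K\<ge>K0. norm (\<Sum>i. f (i + K)) < \<epsilon>\<^sup>2"
    using suminf_exist_split[OF _ sf, of "\<epsilon>\<^sup>2"] e by auto
  define K where "K = max K0 3"
  define y where "y = (\<lambda>n. \<Sum>j\<in>{3..<K}. x j * ee j n)"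
  have yA: "y \<in> A" unfolding y_def by (intro A_sum A_scale ee_A) auto
  have r: "(\<lambda>n. x n - y n) = (\<lambda>n. if n < K then 0 else x n)"
  proof
    fix n
    have "y n = (if 3 \<le> n \<and> n < K then x n else 0)"
      unfolding y_def ee_def by (simp add: if_distrib cong: if_cong)
    thus "x n - y n = (if n < K then 0 else x n)" using z[of n] by auto
  qed
  define g where "g n = (if n < K then 0 else f n)" for n
  have g: "(\<lambda>n. (cmod (if n < K then 0 else x n))\<^sup>2 / \<omega> n) = g"
    by (auto simp: g_def f_def)
  have sg: "summable g"
    by (rule summ_le[OF sf]) (auto simp: g_def f_def pos intro!: divide_nonneg_pos)
  have "(\<Sum>n. g n) = (\<Sum>n. g (n + K)) + (\<Sum>i<K. g i)" by (rule suminf_split_initial_segment[OF sg])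
  also have "\<dots> = (\<Sum>n. f (n + K))" by (simp add: g_def)
  also have "\<dots> < \<epsilon>\<^sup>2"
  proof -
    have "norm (\<Sum>i. f (i + K)) < \<epsilon>\<^sup>2" using K0 by (auto simp: K_def)
    thus ?thesis by simp
  qed
  finally have "Nm (\<lambda>n. x n - y n) < sqrt (\<epsilon>\<^sup>2)"
    unfolding Nm_def r g by (rule real_sqrt_less_mono)
  thus "\<exists>y\<in>A. Nm (\<lambda>n. x n - y n) < \<epsilon>" using yA e by auto
qed

end

lemma sp_summ:
  assumes "strict_mono p" "cmod \<mu> \<le> 1" "cmod z < 1"
  shows "summable (\<lambda>j. \<mu> ^ j * z ^ p j)"
proof (rule summable_comparison_test'[where N=0])
  have pj: "j \<le> p j" for j using assms(1) by (rule strict_mono_imp_increasing)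
  show "summable (\<lambda>j. cmod z ^ j)" using assms(3) by (simp add: summable_geometric)
  fix j
  have "cmod (\<mu> ^ j * z ^ p j) = cmod \<mu> ^ j * cmod z ^ p j" by (simp add: norm_mult norm_power)
  also have "\<dots> \<le> 1 * cmod z ^ j"
    using assms pj by (intro mult_mono power_le_one power_decreasing) auto
  finally show "norm (\<mu> ^ j * z ^ p j) \<le> cmod z ^ j" by simp
qed

lemma Hc_sums:
  assumes "cmod \<mu> < 1" "cmod z < 1"
  shows "(\<lambda>n. Hc m \<mu> n * z ^ n) sums h_fun m \<mu> z"
proof (cases "m = 0")
  case True
  have "(\<lambda>n. sp P0 \<mu> n * z ^ n) sums (\<Sum>j. \<mu> ^ j * z ^ P0 j)"
    using sp_sums[OF sm_P0, of \<mu> z] assms by simp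
  thus ?thesis using True by (simp add: Hc_def h_fun_def P0_def)
next
  case False
  have a: "(\<lambda>n. sp (PM m) \<mu> n * z ^ n) sums (\<Sum>j. \<mu> ^ j * z ^ PM m j)"
    using sp_sums[OF sm_PM, of \<mu> z] assms by simp
  have b: "(\<lambda>n. sp (QM m) \<mu> n * z ^ n) sums (\<Sum>j. \<mu> ^ j * z ^ QM m j)"
    using sp_sums[OF sm_QM, of \<mu> z] assms by simp
  have "(\<lambda>n. sp (PM m) \<mu> n * z ^ n - sp (QM m) \<mu> n * z ^ n) sums
          ((\<Sum>j. \<mu> ^ j * z ^ PM m j) - (\<Sum>j. \<mu> ^ j * z ^ QM m j))"
    by (rule sums_diff[OF a b])
  also have "(\<Sum>j. \<mu> ^ j * z ^ PM m j) - (\<Sum>j. \<mu> ^ j * z ^ QM m j) = (\<Sum>j. \<mu> ^ j * z ^ PM m j - \<mu> ^ j * z ^ QM m j)"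
  proof -
    have s1: "summable (\<lambda>j. \<mu> ^ j * z ^ PM m j)" using sp_summ[OF sm_PM[of m], of \<mu> z] assms by simp
    have s2: "summable (\<lambda>j. \<mu> ^ j * z ^ QM m j)" using sp_summ[OF sm_QM[of m], of \<mu> z] assms by simp
    show ?thesis using suminf_diff[OF s1 s2] by simp
  qed
  finally have S: "(\<lambda>n. sp (PM m) \<mu> n * z ^ n - sp (QM m) \<mu> n * z ^ n) sums
          (\<Sum>j. \<mu> ^ j * z ^ PM m j - \<mu> ^ j * z ^ QM m j)" .
  have hf: "h_fun m \<mu> z = (\<Sum>j. \<mu> ^ j * z ^ PM m j - \<mu> ^ j * z ^ QM m j)"
    using False by (simp add: h_fun_def PM_def QM_def right_diff_distrib)
  have hc: "(\<lambda>n. Hc m \<mu> n * z ^ n) = (\<lambda>n. sp (PM m) \<mu> n * z ^ n - sp (QM m) \<mu> n * z ^ n)"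
    using False by (simp add: Hc_def left_diff_distrib)
  show ?thesis unfolding hf hc by (rule S)
qed

lemma h_fps:
  assumes "cmod \<mu> < 1"
  shows "h_fun m \<mu> has_fps_expansion Abs_fps (Hc m \<mu>)"
  unfolding has_fps_expansion_def
proof
  have "summable (\<lambda>n. Hc m \<mu> n * (1/2) ^ n)" using Hc_sums[OF assms, of "1/2"] by (auto simp: sums_iff)
  hence "conv_radius (Hc m \<mu>) \<ge> norm (1/2 :: complex)" by (rule conv_radius_geI)
  moreover have "ereal (norm (1/2 :: complex)) > 0" by simp
  ultimately have "conv_radius (Hc m \<mu>) > 0" by (rule order.strict_trans2[rotated])
  thus "fps_conv_radius (Abs_fps (Hc m \<mu>)) > 0" by (simp add: fps_conv_radius_def)
  have "eventually (\<lambda>z. z \<in> ball 0 1) (nhds (0::complex))"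
    by (intro eventually_nhds_in_open) auto
  thus "eventually (\<lambda>z. eval_fps (Abs_fps (Hc m \<mu>)) z = h_fun m \<mu> z) (nhds 0)"
  proof (rule eventually_mono)
    fix z :: complex assume "z \<in> ball 0 1"
    hence "cmod z < 1" by simp
    thus "eval_fps (Abs_fps (Hc m \<mu>)) z = h_fun m \<mu> z"
      using Hc_sums[OF assms] by (simp add: eval_fps_def sums_iff)
  qed
qed

lemma taylor_coef_combo:
  assumes f: "f holomorphic_on ball 0 1" and mu: "\<forall>i<k. cmod (\<mu>s i) < 1"
  shows "taylor_coef (\<lambda>z. f z - (\<Sum>i<k. a i * h_fun (ms i) (\<mu>s i) z)) n
       = taylor_coef f n - (\<Sum>i<k. a i * Hc (ms i) (\<mu>s i) n)"
proof -
  have F: "f has_fps_expansion fps_expansion f 0"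
    using f by (intro has_fps_expansion_fps_expansion) auto
  have H: "(\<lambda>z. \<Sum>i<k. a i * h_fun (ms i) (\<mu>s i) z) has_fps_expansion
             (\<Sum>i<k. fps_const (a i) * Abs_fps (Hc (ms i) (\<mu>s i)))"
    using mu by (intro has_fps_expansion_sum has_fps_expansion_cmult_left h_fps) auto
  have G: "(\<lambda>z. f z - (\<Sum>i<k. a i * h_fun (ms i) (\<mu>s i) z)) has_fps_expansion
             fps_expansion f 0 - (\<Sum>i<k. fps_const (a i) * Abs_fps (Hc (ms i) (\<mu>s i)))"
    by (rule has_fps_expansion_diff[OF F H])
  have tc: "taylor_coef g n = fps_nth G n" if "g has_fps_expansion G" for g G
    using fps_nth_fps_expansion[OF that, of n] by (simp add: taylor_coef_def)
  show ?thesis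
    using tc[OF G] tc[OF F] by (simp add: fps_sum_nth)
qed

context wt
begin

lemma dense: "h_span_dense \<omega>"
  unfolding h_span_dense_def
proof (intro ballI allI impI)
  fix f \<epsilon> assume fX: "f \<in> X_omega \<omega>" and e: "(\<epsilon>::real) > 0"
  define x where "x = taylor_coef f"
  have hol: "f holomorphic_on ball 0 1" and z: "\<And>n. n < 3 \<Longrightarrow> x n = 0" and w: "W x"
    using fX by (auto simp: X_omega_def x_def W_def)
  have "x \<in> A" by (rule coef_A[OF w z])
  then obtain s where s: "s \<in> Sp" "Nm (\<lambda>n. x n - s n) < \<epsilon>" using A_E e by blast
  obtain k :: nat and a ms \<mu>s where r: "\<forall>i<k. \<mu>s i \<in> ball 0 1"
      "s = (\<lambda>n. \<Sum>i<k. a i * Hc (ms i) (\<mu>s i) n)"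
    using Sp_repr[OF s(1)] by blast
  have mu: "\<forall>i<k. cmod (\<mu>s i) < 1" using r(1) by auto
  have "norm_omega \<omega> (\<lambda>z. f z - (\<Sum>i<k. a i * h_fun (ms i) (\<mu>s i) z)) = Nm (\<lambda>n. x n - s n)"
    unfolding norm_omega_def Nm_def taylor_coef_combo[OF hol mu] r(2) x_def ..
  thus "\<exists>(k::nat) (a::nat \<Rightarrow> complex) (ms::nat \<Rightarrow> nat) (\<mu>s::nat \<Rightarrow> complex).
        (\<forall>i<k. \<mu>s i \<in> ball 0 1) \<and>
        norm_omega \<omega> (\<lambda>z. f z - (\<Sum>i<k. a i * h_fun (ms i) (\<mu>s i) z)) < \<epsilon>"
    using s(2) r(1) by metis
qed

end

theorem theorem2p4:
  shows "(\<forall>\<omega>::nat \<Rightarrow> real. (\<forall>n. \<omega> n > 0) \<and> (\<exists>c>0. \<forall>n. c \<le> \<omega> n) \<longrightarrow> h_span_dense \<omega>)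
         \<and> h_span_dense omega0"
proof -
  have gen: "h_span_dense \<omega>" if a1: "\<forall>n. \<omega> n > 0" and a2: "\<exists>c>0. \<forall>n. c \<le> \<omega> n" for \<omega> :: "nat \<Rightarrow> real"
  proof -
    obtain c where c: "c > 0" "\<forall>n. c \<le> \<omega> n" using a2 by blast
    interpret wt \<omega> c using a1 c by unfold_locales auto
    show ?thesis by (rule dense)
  qed
  have "h_span_dense omega0"
  proof (rule gen)
    show "\<forall>n. omega0 n > 0" by (simp add: omega0_def)
    have "\<forall>n. 1 / pi \<le> omega0 n" by (simp add: omega0_def divide_right_mono)
    thus "\<exists>c>0. \<forall>n. c \<le> omega0 n" by (intro exI[of _ "1/pi"]) auto
  qed
  thus ?thesis using gen by blast
qed

end
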